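(* Let $G$ be a finite simple unmixed graph with vertex set $V(G)=\{t_1,\ldots,t_s\}$, let $C_1,\ldots,C_r$ be the minimal vertex covers of $G$, let $J=I_c(G)$, and let $\mathcal{G}_J$ be the graph of $J$. Then: (a) $\{C_i,C_j\}$ is an edge of $\mathcal{G}_J$ if and only if there exists an edge $\{t_k,t_\ell\}\in E(G)$ such that $t_k\in C_i$, $t_\ell\notin C_i$ and $(C_i\setminus\{t_k\})\cup\{t_\ell\}=C_j$. In particular, every non-isolated vertex of $\mathcal{G}_J$ (viewed as a vertex cover of $G$) has the exchange property. (b) $\mathcal{G}_J$ is not a discrete graph (i.e. it has at least one edge) if and only if ${\rm v}(I_c(G))=\alpha_0(G)-1$. (c) If $I_c(G)$ is linearly presented, then all minimal vertex covers of $G$ have the exchange property and ${\rm v}(I_c(G))=\alpha_0(G)-1$.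
   Context: $S=K[t_1,\ldots,t_s]$ is a polynomial ring over a field $K$ with the standard grading. A vertex cover of $G$ is a subset of $V(G)$ meeting every edge; a minimal vertex cover is an inclusion-minimal one; $\alpha_0(G)$ is the minimum size of a vertex cover. $G$ is unmixed if all minimal vertex covers have the same cardinality. The ideal of covers $I_c(G)\subset S$ is generated by the monomials $\prod_{t_i\in C}t_i$, $C$ a minimal vertex cover of $G$. A vertex cover $C$ has the exchange property if there is an edge $\{t_k,t_\ell\}$ with $t_k\in C$, $t_\ell\notin C$ and $(C\setminus\{t_k\})\cup\{t_\ell\}$ a vertex cover of $G$. For unmixed $G$, the graph $\mathcal{G}_J$ of $J=I_c(G)$ has vertex set $\{C_1,\ldots,C_r\}$, and $\{C_i,C_j\}$ ($i\ne j$) is an edge iff $|C_i\cup C_j|=|C_i|+1$. For a graded ideal $I\subset S$, the v-number is ${\rm v}(I)=\min\{d\ge 0: \exists f\in S_d,\ \exists \mathfrak p\in{\rm Ass}(I)\text{ with }(I\colon f)=\mathfrak p\}$. An ideal minimally generated by monomials $u_1,\ldots,u_r$ is linearly presented if all $u_i$ have the same degree and the kernel of $S^r\to S$, $e_i\mapsto u_i$, is generated by vectors whose entries are linear forms. *)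

theory Defs
  imports "HOL-Library.Poly_Mapping"
begin

text \<open>A finite simple graph on the vertex set UNIV of a finite type 'v
  (the vertices t_1,...,t_s); edges are 2-element subsets.\<close>

definition simple_graph :: "'v set set \<Rightarrow> bool" where
  "simple_graph E \<longleftrightarrow> (\<forall>e\<in>E. card e = 2)"

definition vertex_cover :: "'v set set \<Rightarrow> 'v set \<Rightarrow> bool" where
  "vertex_cover E C \<longleftrightarrow> (\<forall>e\<in>E. e \<inter> C \<noteq> {})"

definition minimal_vertex_cover :: "'v set set \<Rightarrow> 'v set \<Rightarrow> bool" where
  "minimal_vertex_cover E C \<longleftrightarrow> vertex_cover E C \<and> (\<forall>D. D \<subset> C \<longrightarrow> \<not> vertex_cover E D)"

definition alpha0 :: "'v set set \<Rightarrow> nat" where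
  "alpha0 E = Min (card ` {C. vertex_cover E C})"

definition unmixed :: "'v set set \<Rightarrow> bool" where
  "unmixed E \<longleftrightarrow> (\<forall>C D. minimal_vertex_cover E C \<longrightarrow> minimal_vertex_cover E D \<longrightarrow> card C = card D)"

definition exchange_property :: "'v set set \<Rightarrow> 'v set \<Rightarrow> bool" where
  "exchange_property E C \<longleftrightarrow>
     (\<exists>k l. {k, l} \<in> E \<and> k \<in> C \<and> l \<notin> C \<and> vertex_cover E ((C - {k}) \<union> {l}))"

text \<open>Edges of the graph G_J of J = I_c(G) (for unmixed G).\<close>
definition GJ_edge :: "'v set set \<Rightarrow> 'v set \<Rightarrow> 'v set \<Rightarrow> bool" where
  "GJ_edge E C D \<longleftrightarrow> minimal_vertex_cover E C \<and> minimal_vertex_cover E D \<and> C \<noteq> D \<and>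
     card (C \<union> D) = card C + 1"

definition Var :: "'v \<Rightarrow> ('v \<Rightarrow>\<^sub>0 nat) \<Rightarrow>\<^sub>0 'k::comm_ring_1" where
  "Var v = Poly_Mapping.single (Poly_Mapping.single v 1) 1"

definition mon_deg :: "('v \<Rightarrow>\<^sub>0 nat) \<Rightarrow> nat" where
  "mon_deg m = (\<Sum>v\<in>Poly_Mapping.keys m. Poly_Mapping.lookup m v)"

text \<open>f is in S_d, i.e. homogeneous of degree d (0 is in every S_d).\<close>
definition homogeneous :: "nat \<Rightarrow> (('v \<Rightarrow>\<^sub>0 nat) \<Rightarrow>\<^sub>0 'k::zero) \<Rightarrow> bool" where
  "homogeneous d f \<longleftrightarrow> (\<forall>m\<in>Poly_Mapping.keys f. mon_deg m = d)"

definition is_monomial :: "(('v \<Rightarrow>\<^sub>0 nat) \<Rightarrow>\<^sub>0 'k::{zero,one}) \<Rightarrow> bool" where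
  "is_monomial f \<longleftrightarrow> (\<exists>m. f = Poly_Mapping.single m 1)"

definition ideal_gen :: "'a::comm_ring_1 set \<Rightarrow> 'a set" where
  "ideal_gen B = {x. \<exists>F a. finite F \<and> F \<subseteq> B \<and> x = (\<Sum>b\<in>F. a b * b)}"

definition is_ideal :: "'a::comm_ring_1 set \<Rightarrow> bool" where
  "is_ideal I \<longleftrightarrow> 0 \<in> I \<and> (\<forall>x\<in>I. \<forall>y\<in>I. x + y \<in> I) \<and> (\<forall>x\<in>I. \<forall>r. r * x \<in> I)"

definition prime_ideal :: "'a::comm_ring_1 set \<Rightarrow> bool" where
  "prime_ideal P \<longleftrightarrow> is_ideal P \<and> P \<noteq> UNIV \<and> (\<forall>a b. a * b \<in> P \<longrightarrow> a \<in> P \<or> b \<in> P)"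

definition colon :: "'a::comm_ring_1 set \<Rightarrow> 'a \<Rightarrow> 'a set" where
  "colon I f = {g. g * f \<in> I}"

definition Ass :: "'a::comm_ring_1 set \<Rightarrow> 'a set set" where
  "Ass I = {P. prime_ideal P \<and> (\<exists>f. colon I f = P)}"

definition vnumber :: "(('v \<Rightarrow>\<^sub>0 nat) \<Rightarrow>\<^sub>0 'k::field) set \<Rightarrow> nat" where
  "vnumber I = (LEAST d. \<exists>f P. homogeneous d f \<and> P \<in> Ass I \<and> colon I f = P)"

definition cover_monomial :: "'v set \<Rightarrow> ('v \<Rightarrow>\<^sub>0 nat) \<Rightarrow>\<^sub>0 'k::comm_ring_1" where
  "cover_monomial C = (\<Prod>v\<in>C. Var v)"

definition Ic :: "'v set set \<Rightarrow> (('v \<Rightarrow>\<^sub>0 nat) \<Rightarrow>\<^sub>0 'k::comm_ring_1) set" where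
  "Ic E = ideal_gen {cover_monomial C | C. minimal_vertex_cover E C}"

text \<open>Vectors in S^r are indexed by the generators u \<in> U: functions U \<rightarrow> S
  (zero outside U).  The syzygy module is the kernel of e_u \<mapsto> u.\<close>

definition syzygies :: "'a::comm_ring_1 set \<Rightarrow> ('a \<Rightarrow> 'a) set" where
  "syzygies U = {a. (\<forall>u. u \<notin> U \<longrightarrow> a u = 0) \<and> (\<Sum>u\<in>U. a u * u) = 0}"

definition module_span :: "('a::comm_ring_1 \<Rightarrow> 'a) set \<Rightarrow> ('a \<Rightarrow> 'a) set" where
  "module_span W = {x. \<exists>F c. finite F \<and> F \<subseteq> W \<and> x = (\<lambda>u. \<Sum>w\<in>F. c w * w u)}"

definition minimally_generates :: "'a::comm_ring_1 set \<Rightarrow> 'a set \<Rightarrow> bool" where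
  "minimally_generates U I \<longleftrightarrow> ideal_gen U = I \<and> (\<forall>V. V \<subset> U \<longrightarrow> ideal_gen V \<noteq> I)"

definition linearly_presented :: "(('v \<Rightarrow>\<^sub>0 nat) \<Rightarrow>\<^sub>0 'k::field) set \<Rightarrow> bool" where
  "linearly_presented I \<longleftrightarrow>
     (\<exists>U. finite U \<and> minimally_generates U I \<and> (\<forall>u\<in>U. is_monomial u) \<and>
        (\<exists>d. \<forall>u\<in>U. homogeneous d u) \<and>
        syzygies U = module_span {a \<in> syzygies U. \<forall>u\<in>U. homogeneous 1 (a u)})"

end

theory Submission
  imports Defs "HOL-Library.Countable"
begin

abbreviation lk where "lk \<equiv> Poly_Mapping.lookup"
abbreviation ks where "ks \<equiv> Poly_Mapping.keys"
abbreviation sng where "sng \<equiv> Poly_Mapping.single"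

lemma lookup_mult_fin:
  fixes f g :: "'a::monoid_add \<Rightarrow>\<^sub>0 'b::semiring_0"
  shows "lk (f * g) q =
    (\<Sum>a\<in>ks f. \<Sum>b\<in>ks g. if a + b = q then lk f a * lk g b else 0)"
proof -
  have i: "(\<Sum>q'. lk g q' when q = l + q') =
       (\<Sum>b\<in>ks g. if l + b = q then lk g b else 0)" for l
    by (subst Sum_any.expand_superset[of "ks g"])
       (auto simp: when_def in_keys_iff intro!: sum.cong)
  have "lk (f * g) q = (\<Sum>l. lk f l *
       (\<Sum>b\<in>ks g. if l + b = q then lk g b else 0))"
    by (simp add: lookup_mult i)
  also have "\<dots> = (\<Sum>a\<in>ks f. lk f a *
       (\<Sum>b\<in>ks g. if a + b = q then lk g b else 0))"
    by (subst Sum_any.expand_superset[of "ks f"]) (auto simp: in_keys_iff)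
  also have "\<dots> = (\<Sum>a\<in>ks f. \<Sum>b\<in>ks g. if a + b = q then lk f a * lk g b else 0)"
    by (simp add: sum_distrib_left if_distrib cong: if_cong)
  finally show ?thesis .
qed

lemma lookup_mult_single1:
  fixes g :: "('v \<Rightarrow>\<^sub>0 nat) \<Rightarrow>\<^sub>0 'b::semiring_1"
  shows "lk (g * sng m 1) q = (\<Sum>y\<in>ks g. if y + m = q then lk g y else 0)"
proof (cases "(1::'b) = 0")
  case True
  then have "\<And>x::'b. x = 0" by (metis mult_1 mult_zero_left)
  then show ?thesis by (simp add: sum.neutral)
next
  case False
  then have km: "ks (sng m (1::'b)) = {m}" by simp
  show ?thesis unfolding lookup_mult_fin[of g] km by (intro sum.cong refl) simp
qed

lemma lookup_mult_single_at:
  fixes g :: "('v \<Rightarrow>\<^sub>0 nat) \<Rightarrow>\<^sub>0 'b::semiring_1"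
  shows "lk (g * sng m 1) (y + m) = lk g y"
proof -
  have "lk (g * sng m 1) (y + m) = (\<Sum>y'\<in>ks g. if y' = y then lk g y' else 0)"
    unfolding lookup_mult_single1 by (intro sum.cong) auto
  also have "\<dots> = lk g y" by (simp add: sum.delta in_keys_iff)
  finally show ?thesis .
qed

lemma keys_mult_single1:
  fixes g :: "('v \<Rightarrow>\<^sub>0 nat) \<Rightarrow>\<^sub>0 'b::semiring_1"
  shows "ks (g * sng m 1) = (\<lambda>y. y + m) ` ks g"
proof
  show "ks (g * sng m 1) \<subseteq> (\<lambda>y. y + m) ` ks g"
  proof
    fix q assume "q \<in> ks (g * sng m 1)"
    then have "(\<Sum>y\<in>ks g. if y + m = q then lk g y else 0) \<noteq> 0"
      by (simp add: in_keys_iff lookup_mult_single1)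
    then have "\<exists>y\<in>ks g. (if y + m = q then lk g y else 0) \<noteq> 0"
    proof (rule contrapos_pp)
      assume "\<not> (\<exists>y\<in>ks g. (if y + m = q then lk g y else 0) \<noteq> 0)"
      then show "\<not> (\<Sum>y\<in>ks g. if y + m = q then lk g y else 0) \<noteq> 0"
        by (simp add: sum.neutral)
    qed
    then obtain y where "y \<in> ks g" "(if y + m = q then lk g y else 0) \<noteq> 0"
      by blast
    then have "y + m = q" by (simp split: if_splits)
    with \<open>y \<in> ks g\<close> show "q \<in> (\<lambda>y. y + m) ` ks g" by blast
  qed
  show "(\<lambda>y. y + m) ` ks g \<subseteq> ks (g * sng m 1)"
    by (auto simp: in_keys_iff lookup_mult_single_at)
qed

lemma keys_add_nat:
  fixes a b :: "'v \<Rightarrow>\<^sub>0 nat"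
  shows "ks (a + b) = ks a \<union> ks b"
  by (auto simp: in_keys_iff lookup_add)

definition ind :: "'v set \<Rightarrow> 'v \<Rightarrow>\<^sub>0 nat" where
  "ind A = (\<Sum>v\<in>A. sng v 1)"

lemma lookup_ind: "finite A \<Longrightarrow> lk (ind A) v = (if v \<in> A then 1 else 0)"
  unfolding ind_def lookup_sum by (simp add: lookup_single when_def sum.delta)

lemma keys_ind: "finite A \<Longrightarrow> ks (ind A) = A"
  by (auto simp: in_keys_iff lookup_ind split: if_splits)

lemma ind_insert: "finite A \<Longrightarrow> a \<notin> A \<Longrightarrow> ind (insert a A) = sng a 1 + ind A"
  by (simp add: ind_def)

lemma cover_monomial_eq:
  "finite C \<Longrightarrow> (cover_monomial C :: ('v \<Rightarrow>\<^sub>0 nat) \<Rightarrow>\<^sub>0 'k::comm_ring_1) = sng (ind C) 1"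
proof (induction C rule: finite_induct)
  case empty
  then show ?case by (simp add: cover_monomial_def ind_def)
next
  case (insert a F)
  then show ?case
    by (simp add: cover_monomial_def ind_insert Var_def mult_single)
qed

lemma mon_deg_ind: "finite A \<Longrightarrow> mon_deg (ind A) = card A"
  by (simp add: mon_deg_def keys_ind lookup_ind)

lemma card_keys_le_mon_deg: "card (ks m) \<le> mon_deg m"
proof -
  have "card (ks m) = (\<Sum>v\<in>ks m. 1)" by simp
  also have "\<dots> \<le> (\<Sum>v\<in>ks m. lk m v)"
    by (intro sum_mono) (auto simp: in_keys_iff)
  finally show ?thesis by (simp add: mon_deg_def)
qed

lemma mon_deg_eq_card_ind:
  assumes "mon_deg m = card (ks m)"
  shows "m = ind (ks m)"
proof -
  have s: "(\<Sum>v\<in>ks m. lk m v) = (\<Sum>v\<in>ks m. 1)" using assms by (simp add: mon_deg_def)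
  have le: "\<And>v. v\<in>ks m \<Longrightarrow> 1 \<le> lk m v" by (auto simp: in_keys_iff)
  have "\<forall>v\<in>ks m. lk m v = 1"
    using sum_mono_inv[OF s[symmetric] le] by auto
  then show ?thesis
    by (intro poly_mapping_eqI) (auto simp: lookup_ind in_keys_iff)
qed


lemma vc_mono: "vertex_cover E A \<Longrightarrow> A \<subseteq> B \<Longrightarrow> vertex_cover E B"
  unfolding vertex_cover_def by blast

lemma vc_contains_min:
  fixes S :: "'v::finite set"
  shows "vertex_cover E S \<Longrightarrow> \<exists>C. minimal_vertex_cover E C \<and> C \<subseteq> S"
proof (induction "card S" arbitrary: S rule: less_induct)
  case less
  show ?case
  proof (cases "minimal_vertex_cover E S")
    case True thus ?thesis by blast
  next
    case False
    then obtain D where D: "D \<subset> S" "vertex_cover E D"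
      using less.prems unfolding minimal_vertex_cover_def by blast
    then have "card D < card S" by (intro psubset_card_mono) auto
    from less.hyps[OF this D(2)] D(1) show ?thesis by (meson order.trans psubset_imp_subset)
  qed
qed

lemma ideal_gen_add:
  assumes "x \<in> ideal_gen B" "y \<in> ideal_gen B"
  shows "x + y \<in> ideal_gen B"
proof -
  obtain F1 a1 where F1: "finite F1" "F1 \<subseteq> B" "x = (\<Sum>b\<in>F1. a1 b * b)"
    using assms(1) unfolding ideal_gen_def by blast
  obtain F2 a2 where F2: "finite F2" "F2 \<subseteq> B" "y = (\<Sum>b\<in>F2. a2 b * b)"
    using assms(2) unfolding ideal_gen_def by blast
  define a where "a b = (if b \<in> F1 then a1 b else 0) + (if b \<in> F2 then a2 b else 0)" for b
  have "(\<Sum>b\<in>F1\<union>F2. a b * b) = (\<Sum>b\<in>F1\<union>F2. (if b \<in> F1 then a1 b * b else 0))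
      + (\<Sum>b\<in>F1\<union>F2. (if b \<in> F2 then a2 b * b else 0))"
    by (simp only: sum.distrib[symmetric]) (intro sum.cong refl, simp add: a_def distrib_right)
  also have "\<dots> = x + y"
  proof -
    have "(\<Sum>b\<in>F1\<union>F2. (if b \<in> F1 then a1 b * b else 0)) = (\<Sum>b\<in>F1. (if b \<in> F1 then a1 b * b else 0))"
      by (rule sum.mono_neutral_right) (use F1 F2 in auto)
    also have "\<dots> = x" unfolding F1(3) by (intro sum.cong) auto
    finally have 1: "(\<Sum>b\<in>F1\<union>F2. (if b \<in> F1 then a1 b * b else 0)) = x" .
    have "(\<Sum>b\<in>F1\<union>F2. (if b \<in> F2 then a2 b * b else 0)) = (\<Sum>b\<in>F2. (if b \<in> F2 then a2 b * b else 0))"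
      by (rule sum.mono_neutral_right) (use F1 F2 in auto)
    also have "\<dots> = y" unfolding F2(3) by (intro sum.cong) auto
    finally have 2: "(\<Sum>b\<in>F1\<union>F2. (if b \<in> F2 then a2 b * b else 0)) = y" .
    show ?thesis unfolding 1 2 ..
  qed
  finally show ?thesis
    unfolding ideal_gen_def using F1(1,2) F2(1,2) by (intro CollectI exI[of _ "F1 \<union> F2"] exI[of _ a]) auto
qed

lemma ideal_gen_mult:
  assumes "x \<in> ideal_gen B"
  shows "r * x \<in> ideal_gen B"
proof -
  obtain F a where F: "finite F" "F \<subseteq> B" "x = (\<Sum>b\<in>F. a b * b)"
    using assms unfolding ideal_gen_def mem_Collect_eq by (elim exE conjE)
  have "r * x = (\<Sum>b\<in>F. (r * a b) * b)"
    unfolding F(3) sum_distrib_left by (simp add: mult.assoc)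
  then show ?thesis unfolding ideal_gen_def using F(1,2)
    by (intro CollectI exI[of _ F] exI[of _ "\<lambda>b. r * a b"]) simp
qed

lemma ideal_gen_base: "b \<in> B \<Longrightarrow> b \<in> ideal_gen B"
  unfolding ideal_gen_def by (intro CollectI exI[of _ "{b}"] exI[of _ "\<lambda>_. 1"]) auto

lemma ideal_gen_zero: "0 \<in> ideal_gen B"
  unfolding ideal_gen_def by (intro CollectI exI[of _ "{}"]) auto

lemma ideal_gen_sum:
  "finite A \<Longrightarrow> (\<And>i. i \<in> A \<Longrightarrow> f i \<in> ideal_gen B) \<Longrightarrow> sum f A \<in> ideal_gen B"
  by (induction A rule: finite_induct) (auto intro: ideal_gen_zero ideal_gen_add)

lemma sum_monomials:
  "(\<Sum>m\<in>ks g. sng m (lk g m)) = g"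
  by (intro poly_mapping_eqI)
     (simp add: lookup_sum lookup_single when_def sum.delta in_keys_iff)

lemma Ic_char:
  fixes E :: "('v::finite) set set"
  shows "g \<in> (Ic E :: (('v \<Rightarrow>\<^sub>0 nat) \<Rightarrow>\<^sub>0 'k::comm_ring_1) set) \<longleftrightarrow>
         (\<forall>m\<in>ks g. vertex_cover E (ks m))"
proof
  assume "g \<in> Ic E"
  then have "\<exists>F a. finite F \<and> F \<subseteq> {cover_monomial C | C. minimal_vertex_cover E C} \<and>
      g = (\<Sum>b\<in>F. a b * b)"
    unfolding Ic_def ideal_gen_def mem_Collect_eq .
  then obtain F a where F: "finite F" "F \<subseteq> {cover_monomial C | C. minimal_vertex_cover E C}"
      "g = (\<Sum>b\<in>F. a b * b)" by (elim exE conjE)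
  show "\<forall>m\<in>ks g. vertex_cover E (ks m)"
  proof
    fix m assume "m \<in> ks g"
    then have "m \<in> (\<Union>b\<in>F. ks (a b * b))"
      using keys_sum[of "\<lambda>b. a b * b" F] F(3) by (simp add: subset_iff)
    then obtain b where b: "b \<in> F" "m \<in> ks (a b * b)" by blast
    then obtain C where C: "minimal_vertex_cover E C" "b = cover_monomial C" using F(2) by blast
    then have "b = sng (ind C) 1" by (simp add: cover_monomial_eq)
    with b(2) have "m \<in> (\<lambda>y. y + ind C) ` ks (a b)" by (simp add: keys_mult_single1)
    then obtain y where "m = y + ind C" by blast
    then have "C \<subseteq> ks m" by (simp add: keys_add_nat keys_ind)
    moreover have "vertex_cover E C" using C(1) by (simp add: minimal_vertex_cover_def)
    ultimately show "vertex_cover E (ks m)" by (rule vc_mono[of E C, rotated])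
  qed
next
  assume A: "\<forall>m\<in>ks g. vertex_cover E (ks m)"
  have "sng m (lk g m) \<in> Ic E" if "m \<in> ks g" for m
  proof -
    have "vertex_cover E (ks m)" using A that by blast
    from vc_contains_min[OF this] obtain C where C: "minimal_vertex_cover E C" "C \<subseteq> ks m"
      by (elim exE conjE)
    have eq: "m = (m - ind C) + ind C"
    proof (intro poly_mapping_eqI)
      fix v
      show "lk m v = lk (m - ind C + ind C) v"
        using C(2) by (auto simp: lookup_add lookup_minus lookup_ind in_keys_iff)
    qed
    have "sng m (lk g m) = sng (m - ind C) (lk g m) * (cover_monomial C :: (('v \<Rightarrow>\<^sub>0 nat) \<Rightarrow>\<^sub>0 'k))"
    proof -
      have "sng (m - ind C) (lk g m) * sng (ind C) 1 = sng (m - ind C + ind C) (lk g m)"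
        by (simp add: mult_single)
      then show ?thesis using eq by (simp add: cover_monomial_eq)
    qed
    moreover have "(cover_monomial C :: (('v \<Rightarrow>\<^sub>0 nat) \<Rightarrow>\<^sub>0 'k)) \<in> Ic E"
      unfolding Ic_def using C(1) by (intro ideal_gen_base) blast
    ultimately show ?thesis unfolding Ic_def by (simp add: ideal_gen_mult)
  qed
  then have "(\<Sum>m\<in>ks g. sng m (lk g m)) \<in> Ic E"
    unfolding Ic_def by (intro ideal_gen_sum) auto
  then show "g \<in> Ic E" by (simp add: sum_monomials)
qed

definition emb :: "('v::countable \<Rightarrow>\<^sub>0 nat) \<Rightarrow> (nat \<Rightarrow>\<^sub>0 nat)" where
  "emb m = (\<Sum>v\<in>ks m. sng (to_nat v) (lk m v))"

lemma lookup_emb_to_nat: "lk (emb m) (to_nat v) = lk m v"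
proof -
  have "lk (emb m) (to_nat v) = (\<Sum>w\<in>ks m. if w = v then lk m w else 0)"
    unfolding emb_def lookup_sum by (intro sum.cong refl) (simp add: lookup_single when_def)
  also have "\<dots> = lk m v" by (simp add: sum.delta in_keys_iff)
  finally show ?thesis .
qed

lemma lookup_emb_other:
  fixes m :: "'v::countable \<Rightarrow>\<^sub>0 nat"
  shows "n \<notin> range (to_nat :: 'v \<Rightarrow> nat) \<Longrightarrow> lk (emb m) n = 0"
  unfolding emb_def lookup_sum by (intro sum.neutral) (force simp: lookup_single when_def)

lemma emb_inj: "emb x = emb y \<Longrightarrow> x = y"
  by (intro poly_mapping_eqI) (metis lookup_emb_to_nat)

lemma emb_add:
  fixes x y :: "'v::countable \<Rightarrow>\<^sub>0 nat"
  shows "emb (x + y) = emb x + emb y"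
proof (intro poly_mapping_eqI)
  fix n
  show "lk (emb (x + y)) n = lk (emb x + emb y) n"
  proof (cases "n \<in> range (to_nat :: 'v \<Rightarrow> nat)")
    case True
    then obtain v :: 'v where "n = to_nat v" by blast
    then show ?thesis by (simp add: lookup_add lookup_emb_to_nat)
  next
    case False
    then show ?thesis by (simp add: lookup_add lookup_emb_other)
  qed
qed

definition Pkl :: "'v \<Rightarrow> 'v \<Rightarrow> (('v \<Rightarrow>\<^sub>0 nat) \<Rightarrow>\<^sub>0 'k::field) set" where
  "Pkl k l = {g. \<forall>m\<in>ks g. k \<in> ks m \<or> l \<in> ks m}"

lemma unique_pair:
  fixes Fa Fb :: "('v::countable \<Rightarrow>\<^sub>0 nat) set"
  assumes xa: "xa \<in> Fa" "\<And>x. x \<in> Fa \<Longrightarrow> emb x \<le> emb xa"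
    and xb: "xb \<in> Fb" "\<And>x. x \<in> Fb \<Longrightarrow> emb x \<le> emb xb"
    and x: "x \<in> Fa" and y: "y \<in> Fb" and s: "x + y = xa + xb"
  shows "x = xa \<and> y = xb"
proof -
  have ex: "emb x \<le> emb xa" using xa(2) x by blast
  have ey: "emb y \<le> emb xb" using xb(2) y by blast
  have es: "emb x + emb y = emb xa + emb xb" using s by (metis emb_add)
  have "emb x = emb xa"
  proof (rule ccontr)
    assume "emb x \<noteq> emb xa"
    with ex have "emb x < emb xa" by simp
    then have "emb x + emb y < emb xa + emb xb" using ey by (rule add_less_le_mono)
    with es show False by simp
  qed
  then have "x = xa" by (rule emb_inj)
  with s have "y = xb" by simp
  with \<open>x = xa\<close> show ?thesis by simp
qed

lemma Pkl_prime:
  fixes k l :: "'v::countable"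
  shows "prime_ideal (Pkl k l :: (('v \<Rightarrow>\<^sub>0 nat) \<Rightarrow>\<^sub>0 'k::field) set)"
proof -
  let ?P = "Pkl k l :: (('v \<Rightarrow>\<^sub>0 nat) \<Rightarrow>\<^sub>0 'k::field) set"
  have z: "0 \<in> ?P" by (simp add: Pkl_def)
  have add: "x + y \<in> ?P" if "x \<in> ?P" "y \<in> ?P" for x y
    using that keys_add[of x y] unfolding Pkl_def by blast
  have mul: "r * x \<in> ?P" if "x \<in> ?P" for r x
  proof -
    have "k \<in> ks m \<or> l \<in> ks m" if m: "m \<in> ks (r * x)" for m
    proof -
      from m keys_mult[of r x] obtain a b where "m = a + b" "b \<in> ks x" by blast
      with \<open>x \<in> ?P\<close> show ?thesis unfolding Pkl_def by (auto simp: keys_add_nat)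
    qed
    then show ?thesis unfolding Pkl_def by blast
  qed
  have nU: "?P \<noteq> UNIV"
  proof
    assume "?P = UNIV"
    then have "(1 :: ('v \<Rightarrow>\<^sub>0 nat) \<Rightarrow>\<^sub>0 'k) \<in> ?P" by simp
    then show False unfolding Pkl_def by simp
  qed
  have pr: "a \<in> ?P \<or> b \<in> ?P" if ab: "a * b \<in> ?P" for a b
  proof (rule ccontr)
    assume "\<not> (a \<in> ?P \<or> b \<in> ?P)"
    then have na: "a \<notin> ?P" and nb: "b \<notin> ?P" by auto
    define Fa where "Fa = {x\<in>ks a. k \<notin> ks x \<and> l \<notin> ks x}"
    define Fb where "Fb = {x\<in>ks b. k \<notin> ks x \<and> l \<notin> ks x}"
    have Fa: "finite Fa" "Fa \<noteq> {}" using na unfolding Fa_def Pkl_def by auto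
    have Fb: "finite Fb" "Fb \<noteq> {}" using nb unfolding Fb_def Pkl_def by auto
    have "Max (emb ` Fa) \<in> emb ` Fa" using Fa by (intro Max_in) auto
    then obtain xa where xa1: "xa \<in> Fa" and xa_eq: "emb xa = Max (emb ` Fa)" by auto
    have xa2: "emb x \<le> emb xa" if "x \<in> Fa" for x
      unfolding xa_eq using Fa that by (intro Max_ge) auto
    have "Max (emb ` Fb) \<in> emb ` Fb" using Fb by (intro Max_in) auto
    then obtain xb where xb1: "xb \<in> Fb" and xb_eq: "emb xb = Max (emb ` Fb)" by auto
    have xb2: "emb x \<le> emb xb" if "x \<in> Fb" for x
      unfolding xb_eq using Fb that by (intro Max_ge) auto
    define q where "q = xa + xb"
    have kq: "k \<notin> ks q" "l \<notin> ks q"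
      using xa1 xb1 unfolding q_def Fa_def Fb_def by (auto simp: keys_add_nat)
    have uniq: "x = xa \<and> y = xb" if "x \<in> ks a" "y \<in> ks b" "x + y = q" for x y
    proof -
      have "ks x \<subseteq> ks q" "ks y \<subseteq> ks q" using that(3) by (auto simp: keys_add_nat)
      then have "x \<in> Fa" "y \<in> Fb" using that(1,2) kq unfolding Fa_def Fb_def by auto
      then show ?thesis using unique_pair[OF xa1 xa2 xb1 xb2] that(3) unfolding q_def by blast
    qed
    have xak: "xa \<in> ks a" and xbk: "xb \<in> ks b" using xa1 xb1 unfolding Fa_def Fb_def by auto
    have "lk (a * b) q = (\<Sum>x\<in>ks a. \<Sum>y\<in>ks b. if x + y = q then lk a x * lk b y else 0)"
      by (rule lookup_mult_fin)
    also have "\<dots> = (\<Sum>x\<in>ks a. \<Sum>y\<in>ks b. if x = xa then (if y = xb then lk a xa * lk b xb else 0) else 0)"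
      by (intro sum.cong refl) (auto simp: q_def dest: uniq)
    also have "\<dots> = (\<Sum>x\<in>ks a. if x = xa then lk a xa * lk b xb else 0)"
    proof (intro sum.cong refl)
      fix x assume "x \<in> ks a"
      show "(\<Sum>y\<in>ks b. if x = xa then (if y = xb then lk a xa * lk b xb else 0) else 0) =
        (if x = xa then lk a xa * lk b xb else 0)"
        using xbk by (cases "x = xa") (simp_all add: sum.delta')
    qed
    also have "\<dots> = lk a xa * lk b xb"
      using xak by (simp add: sum.delta')
    also have "\<dots> \<noteq> 0" using xak xbk by (simp add: in_keys_iff)
    finally have "q \<in> ks (a * b)" by (simp add: in_keys_iff)
    with ab kq show False unfolding Pkl_def by blast
  qed
  show ?thesis unfolding prime_ideal_def is_ideal_def
    using z add mul nU pr by blast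
qed

lemma card2_edge:
  assumes "simple_graph E" "e \<in> E"
  obtains k l where "e = {k, l}" "k \<noteq> l"
  using assms unfolding simple_graph_def by (meson card_2_iff)

lemma partA:
  fixes E :: "('v::finite) set set"
  assumes simple: "simple_graph E" and unm: "unmixed E"
    and C: "minimal_vertex_cover E C" and D: "minimal_vertex_cover E D"
  shows "GJ_edge E C D \<longleftrightarrow> (\<exists>k l. {k, l} \<in> E \<and> k \<in> C \<and> l \<notin> C \<and> (C - {k}) \<union> {l} = D)"
proof
  assume G: "GJ_edge E C D"
  have cD: "card D = card C" using unm C D unfolding unmixed_def by metis
  have cU: "card (C \<union> D) = card C + 1" using G unfolding GJ_edge_def by blast
  have "card C + card D = card (C \<union> D) + card (C \<inter> D)"
    by (rule card_Un_Int) auto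
  then have cI: "card (C \<inter> D) + 1 = card C" using cD cU by simp
  have "card (C - D) = card C - card (C \<inter> D)"
    by (simp add: card_Diff_subset_Int Diff_Int_distrib2 card_Diff_subset) 
  then have "card (C - D) = 1" using cI by simp
  then obtain k where k: "C - D = {k}" by (meson card_1_singletonE)
  have "card (D - C) = card D - card (C \<inter> D)"
    by (metis Int_commute card_Diff_subset_Int finite inf_le2 card_Diff_subset Diff_Int2 Int_absorb2 Diff_Int_distrib2)
  then have "card (D - C) = 1" using cI cD by simp
  then obtain l where l: "D - C = {l}" by (meson card_1_singletonE)
  have kC: "k \<in> C" "k \<notin> D" using k by auto
  have lD: "l \<in> D" "l \<notin> C" using l by auto
  have Deq: "(C - {k}) \<union> {l} = D" using k l by blast
  have "\<not> vertex_cover E (C - {k})"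
    using C kC unfolding minimal_vertex_cover_def by blast
  then obtain e where e: "e \<in> E" "e \<inter> (C - {k}) = {}" unfolding vertex_cover_def by blast
  have "e \<inter> C \<noteq> {}" "e \<inter> D \<noteq> {}"
    using C D e(1) unfolding minimal_vertex_cover_def vertex_cover_def by auto
  then have ke: "k \<in> e" and le: "l \<in> e" using e(2) Deq by auto
  obtain a b where ab: "e = {a, b}" "a \<noteq> b" using card2_edge[OF simple e(1)] by blast
  have "k \<noteq> l" using kC lD by blast
  then have "e = {k, l}" using ab ke le by blast
  then show "\<exists>k l. {k, l} \<in> E \<and> k \<in> C \<and> l \<notin> C \<and> (C - {k}) \<union> {l} = D"
    using e(1) kC lD Deq by blast
next
  assume "\<exists>k l. {k, l} \<in> E \<and> k \<in> C \<and> l \<notin> C \<and> (C - {k}) \<union> {l} = D"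
  then obtain k l where kl: "{k, l} \<in> E" "k \<in> C" "l \<notin> C" "(C - {k}) \<union> {l} = D" by blast
  have "C \<union> D = insert l C" using kl by blast
  then have "card (C \<union> D) = card C + 1" using kl(3) by simp
  moreover have "C \<noteq> D" using kl by blast
  ultimately show "GJ_edge E C D" unfolding GJ_edge_def using C D by blast
qed

lemma alpha0_eq:
  fixes E :: "('v::finite) set set"
  assumes unm: "unmixed E" and C: "minimal_vertex_cover E C"
  shows "alpha0 E = card C"
proof -
  let ?S = "card ` {C. vertex_cover E C}"
  have fin: "finite ?S" by simp
  have "vertex_cover E C" using C unfolding minimal_vertex_cover_def by (elim conjE)
  then have "card C \<in> ?S" by (intro imageI CollectI)
  then have ne: "?S \<noteq> {}" by (intro notI) simp
  have "Min ?S \<in> ?S" using fin ne by (rule Min_in)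
  then obtain C0 where C0: "vertex_cover E C0" "card C0 = Min ?S" by auto
  from vc_contains_min[OF C0(1)] obtain C1 where C1: "minimal_vertex_cover E C1" "C1 \<subseteq> C0"
    by (elim exE conjE)
  have "vertex_cover E C1" using C1(1) unfolding minimal_vertex_cover_def by (elim conjE)
  then have "card C1 \<in> ?S" by (intro imageI CollectI)
  then have "Min ?S \<le> card C1" using fin by (intro Min_le)
  moreover have "card C1 \<le> card C0" using C1(2) by (intro card_mono) auto
  ultimately have "card C1 = Min ?S" using C0(2) by simp
  moreover have "card C = card C1" using unm C C1(1) unfolding unmixed_def by metis
  ultimately show ?thesis unfolding alpha0_def by simp
qed

lemma colon_Pkl:
  fixes E :: "('v::finite) set set"
  assumes kl: "{k, l} \<in> E" "k \<notin> A" "l \<notin> A" and only: "\<And>e. e \<in> E \<Longrightarrow> e \<inter> A = {} \<Longrightarrow> e = {k, l}"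
  shows "colon (Ic E :: (('v \<Rightarrow>\<^sub>0 nat) \<Rightarrow>\<^sub>0 'k::field) set) (sng (ind A) 1) = Pkl k l"
proof -
  have key: "vertex_cover E (ks y \<union> A) \<longleftrightarrow> (k \<in> ks y \<or> l \<in> ks y)" for y :: "'v \<Rightarrow>\<^sub>0 nat"
  proof
    assume "vertex_cover E (ks y \<union> A)"
    then have "{k, l} \<inter> (ks y \<union> A) \<noteq> {}" using kl(1) unfolding vertex_cover_def by blast
    then show "k \<in> ks y \<or> l \<in> ks y" using kl(2,3) by blast
  next
    assume h: "k \<in> ks y \<or> l \<in> ks y"
    show "vertex_cover E (ks y \<union> A)" unfolding vertex_cover_def
    proof
      fix e assume "e \<in> E"
      show "e \<inter> (ks y \<union> A) \<noteq> {}"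
      proof (cases "e \<inter> A = {}")
        case True
        then have "e = {k, l}" using only \<open>e \<in> E\<close> by blast
        then show ?thesis using h by blast
      next
        case False then show ?thesis by blast
      qed
    qed
  qed
  show ?thesis
  proof (intro set_eqI)
    fix g :: "('v \<Rightarrow>\<^sub>0 nat) \<Rightarrow>\<^sub>0 'k"
    have "g \<in> colon (Ic E) (sng (ind A) 1) \<longleftrightarrow> g * sng (ind A) 1 \<in> (Ic E :: (('v \<Rightarrow>\<^sub>0 nat) \<Rightarrow>\<^sub>0 'k) set)"
      by (simp add: colon_def)
    also have "\<dots> \<longleftrightarrow> (\<forall>m\<in>ks (g * sng (ind A) 1). vertex_cover E (ks m))"
      by (rule Ic_char)
    also have "\<dots> \<longleftrightarrow> (\<forall>y\<in>ks g. vertex_cover E (ks y \<union> A))"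
      by (simp add: keys_mult_single1 keys_add_nat keys_ind)
    also have "\<dots> \<longleftrightarrow> (\<forall>y\<in>ks g. k \<in> ks y \<or> l \<in> ks y)"
      using key by blast
    also have "\<dots> \<longleftrightarrow> g \<in> Pkl k l" by (simp add: Pkl_def)
    finally show "g \<in> colon (Ic E) (sng (ind A) 1) \<longleftrightarrow> g \<in> Pkl k l" .
  qed
qed

lemma homogeneous_ind:
  fixes A :: "'v::finite set"
  shows "homogeneous (card A) (sng (ind A) (1::'k::field))"
  by (simp add: homogeneous_def mon_deg_ind)

lemma witness_from_A:
  fixes E :: "('v::finite) set set"
  assumes "{k, l} \<in> E" "k \<notin> A" "l \<notin> A" "\<And>e. e \<in> E \<Longrightarrow> e \<inter> A = {} \<Longrightarrow> e = {k, l}"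
  shows "\<exists>f P. homogeneous (card A) f \<and> P \<in> Ass (Ic E :: (('v \<Rightarrow>\<^sub>0 nat) \<Rightarrow>\<^sub>0 'k::field) set)
           \<and> colon (Ic E :: (('v \<Rightarrow>\<^sub>0 nat) \<Rightarrow>\<^sub>0 'k::field) set) f = P"
proof -
  have c: "colon (Ic E :: (('v \<Rightarrow>\<^sub>0 nat) \<Rightarrow>\<^sub>0 'k::field) set) (sng (ind A) 1) = Pkl k l"
    using colon_Pkl[OF assms] .
  have "Pkl k l \<in> Ass (Ic E :: (('v \<Rightarrow>\<^sub>0 nat) \<Rightarrow>\<^sub>0 'k::field) set)"
    unfolding Ass_def using Pkl_prime c by blast
  then show ?thesis using c homogeneous_ind by blast
qed


lemma prime_prod_mem:
  assumes pP: "prime_ideal P" and fin: "finite C"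
  shows "prod g C \<in> P \<Longrightarrow> \<exists>v\<in>C. g v \<in> P"
  using fin
proof (induction C rule: finite_induct)
  case empty
  then have "(1::'a::comm_ring_1) \<in> P" by simp
  then have "\<forall>r. r * 1 \<in> P" using pP unfolding prime_ideal_def is_ideal_def by blast
  then have "P = UNIV" by auto
  then show ?case using pP unfolding prime_ideal_def by blast
next
  case (insert a F)
  then have "g a * prod g F \<in> P" by simp
  then have "g a \<in> P \<or> prod g F \<in> P" using pP unfolding prime_ideal_def by blast
  then show ?case using insert.IH by blast
qed

lemma lower:
  fixes E :: "('v::finite) set set"
  assumes simple: "simple_graph E" and unm: "unmixed E"
    and hom: "homogeneous d f" and PA: "P \<in> Ass (Ic E :: (('v \<Rightarrow>\<^sub>0 nat) \<Rightarrow>\<^sub>0 'k::field) set)"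
    and col: "colon (Ic E :: (('v \<Rightarrow>\<^sub>0 nat) \<Rightarrow>\<^sub>0 'k::field) set) f = P"
  shows "alpha0 E - 1 \<le> d \<and> (d = alpha0 E - 1 \<longrightarrow> (\<exists>C D. GJ_edge E C D))"
proof -
  let ?J = "Ic E :: (('v \<Rightarrow>\<^sub>0 nat) \<Rightarrow>\<^sub>0 'k::field) set"
  have pP: "prime_ideal P" using PA by (simp add: Ass_def)
  have Jmul: "r * x \<in> ?J" if "x \<in> ?J" for r x using that unfolding Ic_def by (rule ideal_gen_mult)
  have fJ: "f \<notin> ?J"
  proof
    assume "f \<in> ?J"
    then have "g * f \<in> ?J" for g by (rule Jmul)
    then have "colon ?J f = UNIV" unfolding colon_def by auto
    with col pP show False by (simp add: prime_ideal_def)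
  qed
  have "\<not> (\<forall>m\<in>ks f. vertex_cover E (ks m))" using fJ Ic_char[where g = f and E = E] by simp
  then obtain m where m: "m \<in> ks f" "\<not> vertex_cover E (ks m)" by blast
  have JP: "x \<in> P" if "x \<in> ?J" for x
  proof -
    have "x * f \<in> ?J" using Jmul[OF that, of f] by (simp add: mult.commute)
    then show ?thesis using col unfolding colon_def by blast
  qed
  have "\<exists>e\<in>E. \<forall>v\<in>e. Var v \<in> P"
  proof (rule ccontr)
    assume "\<not> (\<exists>e\<in>E. \<forall>v\<in>e. Var v \<in> P)"
    then have "vertex_cover E {v. Var v \<notin> P}" unfolding vertex_cover_def by blast
    from vc_contains_min[OF this] obtain C where C: "minimal_vertex_cover E C" "C \<subseteq> {v. Var v \<notin> P}"
      by (elim exE conjE)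
    have "cover_monomial C \<in> ?J" unfolding Ic_def using C(1) by (intro ideal_gen_base) blast
    then have "cover_monomial C \<in> P" by (rule JP)
    then have "prod Var C \<in> P" by (simp add: cover_monomial_def)
    then have "\<exists>v\<in>C. Var v \<in> P" by (rule prime_prod_mem[OF pP finite])
    with C(2) show False by blast
  qed
  then obtain e where e: "e \<in> E" "\<forall>v\<in>e. Var v \<in> P" by blast
  obtain k l where kl0: "e = {k, l}" "k \<noteq> l" using card2_edge[OF simple e(1)] by blast
  have kl: "Var k \<in> P" "Var l \<in> P" using e(2) kl0 by auto
  have side: "\<exists>C. minimal_vertex_cover E C \<and> v \<in> C \<and> C - {v} \<subseteq> ks m \<and> v \<notin> ks m"
    if "Var v \<in> P" for v
  proof -
    have "Var v * f \<in> ?J" using that col unfolding colon_def by blast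
    then have "f * sng (sng v 1) 1 \<in> ?J" by (simp add: Var_def mult.commute)
    then have A: "\<forall>q\<in>ks (f * sng (sng v 1) 1). vertex_cover E (ks q)"
      using Ic_char[where g = "f * sng (sng v 1) 1" and E = E] by simp
    have "m + sng v 1 \<in> ks (f * sng (sng v 1) 1)" using m(1) by (simp add: keys_mult_single1)
    with A have "vertex_cover E (ks (m + sng v 1))" by blast
    then have vc1: "vertex_cover E (ks m \<union> {v})" by (simp add: keys_add_nat)
    have vm: "v \<notin> ks m"
    proof
      assume "v \<in> ks m"
      then have "ks m \<union> {v} = ks m" by blast
      with vc1 m(2) show False by simp
    qed
    from vc_contains_min[OF vc1] obtain C where C: "minimal_vertex_cover E C" "C \<subseteq> ks m \<union> {v}"
      by (elim exE conjE)
    have "v \<in> C"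
    proof (rule ccontr)
      assume "v \<notin> C"
      then have "C \<subseteq> ks m" using C(2) by blast
      moreover have "vertex_cover E C" using C(1) by (simp add: minimal_vertex_cover_def)
      ultimately have "vertex_cover E (ks m)" by (rule vc_mono[rotated])
      with m(2) show False by simp
    qed
    then show ?thesis using C vm by blast
  qed
  obtain C where C: "minimal_vertex_cover E C" "k \<in> C" "C - {k} \<subseteq> ks m" "k \<notin> ks m"
    using side[OF kl(1)] by blast
  obtain D where D: "minimal_vertex_cover E D" "l \<in> D" "D - {l} \<subseteq> ks m" "l \<notin> ks m"
    using side[OF kl(2)] by blast
  have a0: "alpha0 E = card C" by (rule alpha0_eq[OF unm C(1)])
  have dm: "d = mon_deg m" using hom m(1) by (simp add: homogeneous_def)
  have cC: "card (C - {k}) = card C - 1" using C(2) by simp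
  have le1: "card (C - {k}) \<le> card (ks m)" using C(3) by (intro card_mono) auto
  have ckm: "card (ks m) \<le> mon_deg m" by (rule card_keys_le_mon_deg)
  have "alpha0 E - 1 \<le> d" using a0 cC le1 ckm dm by linarith
  moreover have "\<exists>C D. GJ_edge E C D" if dd: "d = alpha0 E - 1"
  proof -
    have "card (ks m) \<le> card (C - {k})" using dd a0 cC ckm dm by linarith
    then have mC: "C - {k} = ks m" using C(3) by (intro card_seteq) auto
    have cD: "card D = card C" using unm C(1) D(1) unfolding unmixed_def by metis
    have "card (D - {l}) = card C - 1" using D(2) cD by simp
    then have "card (ks m) \<le> card (D - {l})" using mC cC by simp
    then have mD: "D - {l} = ks m" using D(3) by (intro card_seteq) auto
    have lC: "l \<notin> C" using D(4) mC kl0(2) by blast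
    have kD: "k \<notin> D" using C(4) mD kl0(2) by blast
    have ne: "C \<noteq> D" using C(2) kD by blast
    have "C \<union> D = insert l C" using mC mD C(2) D(2) by blast
    then have "card (C \<union> D) = card C + 1" using lC by simp
    then have "GJ_edge E C D" unfolding GJ_edge_def using C(1) D(1) ne by blast
    then show ?thesis by blast
  qed
  ultimately show ?thesis by blast
qed

lemma upper:
  fixes E :: "('v::finite) set set"
  assumes simple: "simple_graph E" and unm: "unmixed E" and G: "GJ_edge E C D"
  shows "\<exists>f P. homogeneous (alpha0 E - 1) f \<and> P \<in> Ass (Ic E :: (('v \<Rightarrow>\<^sub>0 nat) \<Rightarrow>\<^sub>0 'k::field) set)
           \<and> colon (Ic E :: (('v \<Rightarrow>\<^sub>0 nat) \<Rightarrow>\<^sub>0 'k::field) set) f = P"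
proof -
  have C: "minimal_vertex_cover E C" and D: "minimal_vertex_cover E D"
    using G unfolding GJ_edge_def by auto
  obtain k l where kl: "{k, l} \<in> E" "k \<in> C" "l \<notin> C" "(C - {k}) \<union> {l} = D"
    using partA[OF simple unm C D] G by blast
  have only: "e = {k, l}" if e: "e \<in> E" "e \<inter> (C - {k}) = {}" for e
  proof -
    have "e \<inter> C \<noteq> {}" "e \<inter> D \<noteq> {}"
      using C D e(1) unfolding minimal_vertex_cover_def vertex_cover_def by auto
    then have ke: "k \<in> e" and le: "l \<in> e" using e(2) kl(4) by auto
    obtain a b where ab: "e = {a, b}" "a \<noteq> b" using card2_edge[OF simple e(1)] by blast
    have "k \<noteq> l" using kl by blast
    then show "e = {k, l}" using ab ke le by blast
  qed
  have w: "\<exists>f P. homogeneous (card (C - {k})) f \<and> P \<in> Ass (Ic E :: (('v \<Rightarrow>\<^sub>0 nat) \<Rightarrow>\<^sub>0 'k::field) set)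
           \<and> colon (Ic E :: (('v \<Rightarrow>\<^sub>0 nat) \<Rightarrow>\<^sub>0 'k::field) set) f = P"
    by (rule witness_from_A) (use kl only in auto)
  have "card (C - {k}) = alpha0 E - 1" using alpha0_eq[OF unm C] kl(2) by simp
  with w show ?thesis by simp
qed

lemma witness_any:
  fixes E :: "('v::finite) set set"
  assumes simple: "simple_graph E" and ne: "E \<noteq> {}"
  shows "\<exists>d f P. homogeneous d f \<and> P \<in> Ass (Ic E :: (('v \<Rightarrow>\<^sub>0 nat) \<Rightarrow>\<^sub>0 'k::field) set)
           \<and> colon (Ic E :: (('v \<Rightarrow>\<^sub>0 nat) \<Rightarrow>\<^sub>0 'k::field) set) f = P"
proof -
  obtain e where e: "e \<in> E" using ne by blast
  obtain k l where kl: "e = {k, l}" "k \<noteq> l" using card2_edge[OF simple e] by blast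
  have only: "e' = {k, l}" if e': "e' \<in> E" "e' \<inter> (UNIV - {k, l}) = {}" for e'
  proof -
    obtain a b where ab: "e' = {a, b}" "a \<noteq> b" using card2_edge[OF simple e'(1)] by blast
    have "a \<in> {k, l}" "b \<in> {k, l}" using e'(2) ab(1) by auto
    then show ?thesis using ab kl(2) by auto
  qed
  have "\<exists>f P. homogeneous (card (UNIV - {k, l})) f \<and> P \<in> Ass (Ic E :: (('v \<Rightarrow>\<^sub>0 nat) \<Rightarrow>\<^sub>0 'k::field) set)
           \<and> colon (Ic E :: (('v \<Rightarrow>\<^sub>0 nat) \<Rightarrow>\<^sub>0 'k::field) set) f = P"
    by (rule witness_from_A) (use e kl only in auto)
  then show ?thesis by blast
qed

lemma vnumber_iff:
  fixes E :: "('v::finite) set set"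
  assumes simple: "simple_graph E" and ne: "E \<noteq> {}" and unm: "unmixed E"
  shows "(\<exists>C D. GJ_edge E C D) \<longleftrightarrow>
         vnumber (Ic E :: (('v \<Rightarrow>\<^sub>0 nat) \<Rightarrow>\<^sub>0 'k::field) set) = alpha0 E - 1"
proof -
  let ?J = "Ic E :: (('v \<Rightarrow>\<^sub>0 nat) \<Rightarrow>\<^sub>0 'k::field) set"
  let ?Q = "\<lambda>d. \<exists>f P. homogeneous d f \<and> P \<in> Ass ?J \<and> colon ?J f = P"
  have vdef: "vnumber ?J = (LEAST d. ?Q d)" by (simp add: vnumber_def)
  show ?thesis
  proof
    assume "\<exists>C D. GJ_edge E C D"
    then obtain C D where G: "GJ_edge E C D" by blast
    have q: "?Q (alpha0 E - 1)" using upper[OF simple unm G] by blast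
    have "alpha0 E - 1 \<le> d" if "?Q d" for d
      using that lower[OF simple unm] by blast
    then have "(LEAST d. ?Q d) = alpha0 E - 1"
      using q by (intro Least_equality) auto
    then show "vnumber ?J = alpha0 E - 1" using vdef by simp
  next
    assume v: "vnumber ?J = alpha0 E - 1"
    have "\<exists>d. ?Q d" using witness_any[OF simple ne] by blast
    then have "?Q (LEAST d. ?Q d)" by (rule LeastI_ex)
    then have "?Q (alpha0 E - 1)" using v vdef by simp
    then obtain f P where fP: "homogeneous (alpha0 E - 1) f" "P \<in> Ass ?J" "colon ?J f = P" by blast
    show "\<exists>C D. GJ_edge E C D" using lower[OF simple unm fP] by blast
  qed
qed


lemma keys_sng1: "ks (sng m (1::'k::field)) = {m}"
  by simp

lemma mem_U:
  fixes E :: "('v::finite) set set"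
  assumes gen: "ideal_gen U = (Ic E :: (('v \<Rightarrow>\<^sub>0 nat) \<Rightarrow>\<^sub>0 'k::field) set)"
    and mon: "\<forall>u\<in>U. is_monomial u" and C': "minimal_vertex_cover E C'"
  shows "(sng (ind C') 1 :: (('v \<Rightarrow>\<^sub>0 nat) \<Rightarrow>\<^sub>0 'k)) \<in> U"
proof -
  let ?u = "sng (ind C') 1 :: (('v \<Rightarrow>\<^sub>0 nat) \<Rightarrow>\<^sub>0 'k)"
  have "?u \<in> (Ic E :: (('v \<Rightarrow>\<^sub>0 nat) \<Rightarrow>\<^sub>0 'k::field) set)"
    unfolding Ic_def cover_monomial_eq[OF finite, symmetric] using C' by (intro ideal_gen_base) blast
  then have "?u \<in> ideal_gen U" using gen by simp
  then have "\<exists>F a. finite F \<and> F \<subseteq> U \<and> ?u = (\<Sum>b\<in>F. a b * b)"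
    unfolding ideal_gen_def mem_Collect_eq .
  then obtain F a where F: "finite F" "F \<subseteq> U" "?u = (\<Sum>b\<in>F. a b * b)" by (elim exE conjE)
  have "ind C' \<in> ks ?u" by simp
  then have "ind C' \<in> (\<Union>b\<in>F. ks (a b * b))"
    using keys_sum[of "\<lambda>b. a b * b" F] F(3) by (simp add: subset_iff)
  then obtain b where b: "b \<in> F" "ind C' \<in> ks (a b * b)" by blast
  have bU: "b \<in> U" using b(1) F(2) by blast
  then obtain mb where mb: "b = sng mb 1" using mon unfolding is_monomial_def by blast
  have "ind C' \<in> (\<lambda>y. y + mb) ` ks (a b)" using b(2) mb by (simp add: keys_mult_single1)
  then obtain y where y: "ind C' = y + mb" by blast
  have "b \<in> (Ic E :: (('v \<Rightarrow>\<^sub>0 nat) \<Rightarrow>\<^sub>0 'k::field) set)" using gen ideal_gen_base[OF bU] by simp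
  then have "\<forall>q\<in>ks b. vertex_cover E (ks q)" using Ic_char[where g = b and E = E] by simp
  then have vmb: "vertex_cover E (ks mb)" using mb by simp
  have "ks (ind C') = ks y \<union> ks mb" unfolding y by (rule keys_add_nat)
  then have sub: "ks mb \<subseteq> C'" using keys_ind[of C'] by simp
  from vc_contains_min[OF vmb] obtain C'' where C'': "minimal_vertex_cover E C''" "C'' \<subseteq> ks mb"
    by (elim exE conjE)
  have "C'' = C'"
  proof (rule ccontr)
    assume "C'' \<noteq> C'"
    then have "C'' \<subset> C'" using C''(2) sub by blast
    moreover have "vertex_cover E C''" using C''(1) by (simp add: minimal_vertex_cover_def)
    ultimately show False using C' unfolding minimal_vertex_cover_def by blast
  qed
  then have kmb: "ks mb = C'" using C''(2) sub by blast
  have "mb = ind C'"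
  proof (intro poly_mapping_eqI)
    fix v
    have e: "lk (ind C') v = lk y v + lk mb v" using y by (simp add: lookup_add)
    show "lk mb v = lk (ind C') v"
    proof (cases "v \<in> C'")
      case True
      then have "v \<in> ks mb" using kmb by simp
      then have "lk mb v \<noteq> 0" by (simp add: in_keys_iff)
      moreover have "lk (ind C') v = 1" using True by (simp add: lookup_ind)
      ultimately show ?thesis using e by simp
    next
      case False
      then have "v \<notin> ks mb" using kmb by simp
      then have "lk mb v = 0" by (simp add: in_keys_iff)
      then show ?thesis using False by (simp add: lookup_ind)
    qed
  qed
  then show ?thesis using bU mb by simp
qed

lemma linsyz_zero:
  fixes E :: "('v::finite) set set"
  assumes gen: "ideal_gen U = (Ic E :: (('v \<Rightarrow>\<^sub>0 nat) \<Rightarrow>\<^sub>0 'k::field) set)"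
    and mon: "\<forall>u\<in>U. is_monomial u" and hom: "\<forall>u\<in>U. homogeneous d u" and finU: "finite U"
    and C: "minimal_vertex_cover E C" and uC: "sng (ind C) 1 \<in> U"
    and iso: "\<forall>D. \<not> GJ_edge E C D"
    and w: "w \<in> syzygies U" "\<forall>u\<in>U. homogeneous 1 (w u)"
  shows "w (sng (ind C) 1) = 0"
proof (rule ccontr)
  let ?uC = "sng (ind C) 1 :: (('v \<Rightarrow>\<^sub>0 nat) \<Rightarrow>\<^sub>0 'k)"
  assume nz: "w ?uC \<noteq> 0"
  have "homogeneous d ?uC" using hom uC by blast
  then have dC: "d = card C" by (simp add: homogeneous_def mon_deg_ind)
  obtain x where x: "x \<in> ks (w ?uC)" using nz by (metis all_not_in_conv keys_eq_empty)
  have "mon_deg x = 1" using w(2) uC x unfolding homogeneous_def by blast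
  then have cx: "card (ks x) \<le> 1" using card_keys_le_mon_deg[of x] by simp
  define q where "q = x + ind C"
  have zero: "lk (w u * u) q = 0" if u: "u \<in> U" "u \<noteq> ?uC" for u
  proof -
    obtain mu where mu: "u = sng mu 1" using mon u(1) unfolding is_monomial_def by blast
    have noy: "y + mu \<noteq> q" for y
    proof
      assume yq: "y + mu = q"
      have "ks (y + mu) = ks (x + ind C)" using yq unfolding q_def by simp
      then have "ks y \<union> ks mu = ks x \<union> C" using keys_ind[of C] by (simp add: keys_add_nat)
      then have sub: "ks mu \<subseteq> ks x \<union> C" by blast
      have "u \<in> (Ic E :: (('v \<Rightarrow>\<^sub>0 nat) \<Rightarrow>\<^sub>0 'k::field) set)" using gen ideal_gen_base[OF u(1)] by simp
      then have "\<forall>r\<in>ks u. vertex_cover E (ks r)" using Ic_char[where g = u and E = E] by simp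
      then have vmu: "vertex_cover E (ks mu)" using mu by simp
      have "homogeneous d u" using hom u(1) by blast
      then have dmu: "mon_deg mu = card C" using mu dC by (simp add: homogeneous_def)
      from vc_contains_min[OF vmu] obtain C' where C': "minimal_vertex_cover E C'" "C' \<subseteq> ks mu"
        by (elim exE conjE)
      show False
      proof (cases "C' = C")
        case True
        then have "C \<subseteq> ks mu" using C'(2) by simp
        moreover have "card (ks mu) \<le> card C" using card_keys_le_mon_deg[of mu] dmu by simp
        ultimately have kmu: "C = ks mu" by (intro card_seteq) auto
        then have "mon_deg mu = card (ks mu)" using dmu by simp
        then have "mu = ind (ks mu)" by (rule mon_deg_eq_card_ind)
        then have "u = ?uC" using mu kmu by simp
        with u(2) show False by simp
      next
        case False
        have "\<not> C' \<subseteq> C"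
        proof
          assume "C' \<subseteq> C"
          then have "C' \<subset> C" using False by blast
          moreover have "vertex_cover E C'" using C'(1) by (simp add: minimal_vertex_cover_def)
          ultimately show False using C unfolding minimal_vertex_cover_def by blast
        qed
        then have "C \<subset> C \<union> C'" by blast
        then have lt: "card C < card (C \<union> C')" by (intro psubset_card_mono) auto
        have "C \<union> C' \<subseteq> ks x \<union> C" using C'(2) sub by blast
        then have "card (C \<union> C') \<le> card (ks x \<union> C)" by (intro card_mono) auto
        also have "\<dots> \<le> card (ks x) + card C" by (rule card_Un_le)
        finally have "card (C \<union> C') = card C + 1" using lt cx by linarith
        then have "GJ_edge E C C'" unfolding GJ_edge_def using C C'(1) False by auto
        with iso show False by blast
      qed
    qed
    have "lk (w u * sng mu 1) q = (\<Sum>y\<in>ks (w u). if y + mu = q then lk (w u) y else 0)"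
      by (rule lookup_mult_single1)
    also have "\<dots> = 0" using noy by (intro sum.neutral) auto
    finally show ?thesis using mu by simp
  qed
  have "(\<Sum>u\<in>U. w u * u) = 0" using w(1) unfolding syzygies_def by blast
  then have "0 = lk (\<Sum>u\<in>U. w u * u) q" by simp
  also have "\<dots> = (\<Sum>u\<in>U. lk (w u * u) q)" by (simp add: lookup_sum)
  also have "\<dots> = lk (w ?uC * ?uC) q + (\<Sum>u\<in>U - {?uC}. lk (w u * u) q)"
    using finU uC by (simp add: sum.remove)
  also have "(\<Sum>u\<in>U - {?uC}. lk (w u * u) q) = 0" using zero by (intro sum.neutral) auto
  also have "lk (w ?uC * ?uC) q = lk (w ?uC) x" unfolding q_def by (rule lookup_mult_single_at)
  finally have "lk (w ?uC) x = 0" by simp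
  with x show False by (simp add: in_keys_iff)
qed

lemma two_covers:
  fixes E :: "('v::finite) set set"
  assumes simple: "simple_graph E" and ne: "E \<noteq> {}" and C: "minimal_vertex_cover E C"
  shows "\<exists>C'. minimal_vertex_cover E C' \<and> C' \<noteq> C"
proof -
  obtain e where e: "e \<in> E" using ne by blast
  obtain k l where kl: "e = {k, l}" "k \<noteq> l" using card2_edge[OF simple e] by blast
  have vcr: "vertex_cover E (UNIV - {v})" for v
    unfolding vertex_cover_def
  proof
    fix e' assume "e' \<in> E"
    then obtain a b where ab: "e' = {a, b}" "a \<noteq> b" using card2_edge[OF simple] by blast
    then show "e' \<inter> (UNIV - {v}) \<noteq> {}" by auto
  qed
  from vc_contains_min[OF vcr[of k]] obtain C1 where C1: "minimal_vertex_cover E C1" "C1 \<subseteq> UNIV - {k}"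
    by (elim exE conjE)
  from vc_contains_min[OF vcr[of l]] obtain C2 where C2: "minimal_vertex_cover E C2" "C2 \<subseteq> UNIV - {l}"
    by (elim exE conjE)
  have "e \<inter> C1 \<noteq> {}" using C1(1) e unfolding minimal_vertex_cover_def vertex_cover_def by blast
  then have "l \<in> C1" using C1(2) kl(1) by blast
  moreover have "l \<notin> C2" using C2(2) by blast
  ultimately have "C1 \<noteq> C2" by blast
  then show ?thesis using C1(1) C2(1) by blast
qed

lemma nonisolated:
  fixes E :: "('v::finite) set set"
  assumes simple: "simple_graph E" and ne: "E \<noteq> {}"
    and lp: "linearly_presented (Ic E :: (('v \<Rightarrow>\<^sub>0 nat) \<Rightarrow>\<^sub>0 'k::field) set)"
    and C: "minimal_vertex_cover E C"
  shows "\<exists>D. GJ_edge E C D"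
proof (rule ccontr)
  let ?J = "Ic E :: (('v \<Rightarrow>\<^sub>0 nat) \<Rightarrow>\<^sub>0 'k::field) set"
  let ?uC = "sng (ind C) 1 :: (('v \<Rightarrow>\<^sub>0 nat) \<Rightarrow>\<^sub>0 'k)"
  assume "\<not> (\<exists>D. GJ_edge E C D)"
  then have iso: "\<forall>D. \<not> GJ_edge E C D" by blast
  obtain U d where U: "finite U" "minimally_generates U ?J" "\<forall>u\<in>U. is_monomial u"
    "\<forall>u\<in>U. homogeneous d u"
    "syzygies U = module_span {a \<in> syzygies U. \<forall>u\<in>U. homogeneous 1 (a u)}"
    using lp unfolding linearly_presented_def by blast
  have gen: "ideal_gen U = ?J" using U(2) unfolding minimally_generates_def by blast
  have uC: "?uC \<in> U" by (rule mem_U[OF gen U(3) C])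
  obtain C' where C': "minimal_vertex_cover E C'" "C' \<noteq> C" using two_covers[OF simple ne C] by blast
  let ?u' = "sng (ind C') 1 :: (('v \<Rightarrow>\<^sub>0 nat) \<Rightarrow>\<^sub>0 'k)"
  have u': "?u' \<in> U" by (rule mem_U[OF gen U(3) C'(1)])
  have neq: "?u' \<noteq> ?uC"
  proof
    assume "?u' = ?uC"
    then have "ks ?u' = ks ?uC" by simp
    then have "ind C' = ind C" by simp
    then have "ks (ind C') = ks (ind C)" by simp
    then show False using C'(2) by (simp add: keys_ind)
  qed
  define s where "s u = (if u = ?uC then ?u' else if u = ?u' then - ?uC else 0)" for u
  have "(\<Sum>u\<in>U. s u * u) = s ?uC * ?uC + (\<Sum>u\<in>U - {?uC}. s u * u)"
    using U(1) uC by (simp add: sum.remove)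
  also have "(\<Sum>u\<in>U - {?uC}. s u * u) = s ?u' * ?u' + (\<Sum>u\<in>U - {?uC} - {?u'}. s u * u)"
    using U(1) u' neq by (simp add: sum.remove)
  also have "(\<Sum>u\<in>U - {?uC} - {?u'}. s u * u) = 0"
    by (intro sum.neutral) (auto simp: s_def)
  finally have "(\<Sum>u\<in>U. s u * u) = 0" using neq by (simp add: s_def mult.commute)
  moreover have "\<forall>u. u \<notin> U \<longrightarrow> s u = 0" using uC u' by (auto simp: s_def)
  ultimately have "s \<in> syzygies U" unfolding syzygies_def by blast
  then have "s \<in> module_span {a \<in> syzygies U. \<forall>u\<in>U. homogeneous 1 (a u)}" using U(5) by simp
  then have "\<exists>F c. finite F \<and> F \<subseteq> {a \<in> syzygies U. \<forall>u\<in>U. homogeneous 1 (a u)} \<and>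
     s = (\<lambda>u. \<Sum>w\<in>F. c w * w u)"
    unfolding module_span_def mem_Collect_eq .
  then obtain F c where F: "finite F" "F \<subseteq> {a \<in> syzygies U. \<forall>u\<in>U. homogeneous 1 (a u)}"
     "s = (\<lambda>u. \<Sum>w\<in>F. c w * w u)" by (elim exE conjE)
  have wz: "w ?uC = 0" if "w \<in> F" for w
  proof -
    have "w \<in> syzygies U" "\<forall>u\<in>U. homogeneous 1 (w u)" using that F(2) by auto
    then show ?thesis by (rule linsyz_zero[OF gen U(3) U(4) U(1) C uC iso])
  qed
  have "s ?uC = (\<Sum>w\<in>F. c w * w ?uC)" using F(3) by simp
  also have "\<dots> = 0" by (intro sum.neutral) (simp add: wz)
  finally have "s ?uC = 0" .
  moreover have "s ?uC = ?u'" by (simp add: s_def)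
  moreover have "?u' \<noteq> 0" by (metis keys_sng1 keys_zero singleton_iff empty_iff)
  ultimately show False by simp
qed


theorem theorem3p5:
  fixes E :: "('v::finite) set set"
  assumes "simple_graph E" and "E \<noteq> {}" and "unmixed E"
  defines "J \<equiv> (Ic E :: (('v \<Rightarrow>\<^sub>0 nat) \<Rightarrow>\<^sub>0 'k::field) set)"
  shows "(\<forall>C D. minimal_vertex_cover E C \<longrightarrow> minimal_vertex_cover E D \<longrightarrow>
            (GJ_edge E C D \<longleftrightarrow>
              (\<exists>k l. {k, l} \<in> E \<and> k \<in> C \<and> l \<notin> C \<and> (C - {k}) \<union> {l} = D)))
       \<and> (\<forall>C. minimal_vertex_cover E C \<longrightarrow> (\<exists>D. GJ_edge E C D) \<longrightarrow> exchange_property E C)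
       \<and> ((\<exists>C D. GJ_edge E C D) \<longleftrightarrow> vnumber J = alpha0 E - 1)
       \<and> (linearly_presented J \<longrightarrow>
            (\<forall>C. minimal_vertex_cover E C \<longrightarrow> exchange_property E C) \<and> vnumber J = alpha0 E - 1)"
proof -
  note simple = assms(1) and ne = assms(2) and unm = assms(3)
  have a: "\<forall>C D. minimal_vertex_cover E C \<longrightarrow> minimal_vertex_cover E D \<longrightarrow>
            (GJ_edge E C D \<longleftrightarrow>
              (\<exists>k l. {k, l} \<in> E \<and> k \<in> C \<and> l \<notin> C \<and> (C - {k}) \<union> {l} = D))"
    using partA[OF simple unm] by blast
  have ex: "exchange_property E C" if G: "GJ_edge E C D" for C D
  proof -
    have C: "minimal_vertex_cover E C" and D: "minimal_vertex_cover E D"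
      using G unfolding GJ_edge_def by auto
    obtain k l where kl: "{k, l} \<in> E" "k \<in> C" "l \<notin> C" "(C - {k}) \<union> {l} = D"
      using partA[OF simple unm C D] G by blast
    have "vertex_cover E D" using D by (simp add: minimal_vertex_cover_def)
    then show ?thesis unfolding exchange_property_def using kl by blast
  qed
  have b: "(\<exists>C D. GJ_edge E C D) \<longleftrightarrow> vnumber J = alpha0 E - 1"
    unfolding J_def by (rule vnumber_iff[OF simple ne unm])
  have c: "(\<forall>C. minimal_vertex_cover E C \<longrightarrow> exchange_property E C) \<and> vnumber J = alpha0 E - 1"
    if lp: "linearly_presented J"
  proof -
    have lp': "linearly_presented (Ic E :: (('v \<Rightarrow>\<^sub>0 nat) \<Rightarrow>\<^sub>0 'k::field) set)"
      using lp unfolding J_def .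
    have all: "exchange_property E C" if C: "minimal_vertex_cover E C" for C
    proof -
      obtain D where "GJ_edge E C D" using nonisolated[OF simple ne lp' C] by blast
      then show ?thesis by (rule ex)
    qed
    have "vertex_cover E UNIV"
      unfolding vertex_cover_def
    proof
      fix e assume "e \<in> E"
      then obtain a b where "e = {a, b}" "a \<noteq> b" using card2_edge[OF simple] by blast
      then show "e \<inter> UNIV \<noteq> {}" by auto
    qed
    from vc_contains_min[OF this] obtain C where C: "minimal_vertex_cover E C" by blast
    obtain D where "GJ_edge E C D" using nonisolated[OF simple ne lp' C] by blast
    then have "vnumber J = alpha0 E - 1" using b by blast
    then show ?thesis using all by blast
  qed
  show ?thesis using a ex b c by blast
qed

end
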